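(* Let $x$ be a theory of $APAL_{int}$, $\varphi\in\mathcal{L}_{APAL_{int}}$ and $i$ an agent. If $K_i\varphi\notin x$, then there is a maximally consistent theory $y$ such that $K_ix\subseteq y$ and $\varphi\notin y$.
   Context: $\mathcal{L}_{APAL_{int}}$: $\varphi ::= p \mid \neg\varphi \mid \varphi\wedge\varphi \mid K_i\varphi \mid \mathrm{int}(\varphi)\mid [\varphi]\varphi\mid\Box\varphi$ over a countable $\mathit{Prop}$ and finite non-empty agent set $\mathcal{A}$; $\mathcal{L}_{PAL_{int}}$ its $\Box$-free fragment; $\bot:=p\wedge\neg p$. Necessity forms: $\xi(\sharp)::=\sharp\mid\varphi\to\xi(\sharp)\mid K_i\xi(\sharp)\mid\mathrm{int}(\xi(\sharp))\mid[\varphi]\xi(\sharp)$. $APAL_{int}$: axioms: propositional tautologies; $K_i(\varphi\to\psi)\to(K_i\varphi\to K_i\psi)$; $K_i\varphi\to\varphi$; $K_i\varphi\to K_iK_i\varphi$; $\neg K_i\varphi\to K_i\neg K_i\varphi$; $\mathrm{int}(\varphi\to\psi)\to(\mathrm{int}(\varphi)\to\mathrm{int}(\psi))$; $\mathrm{int}(\varphi)\to\varphi$; $\mathrm{int}(\varphi)\to\mathrm{int}(\mathrm{int}(\varphi))$; $K_i\varphi\to\mathrm{int}(\varphi)$; $[\varphi]p\leftrightarrow(\mathrm{int}(\varphi)\to p)$; $[\varphi]\neg\psi\leftrightarrow(\mathrm{int}(\varphi)\to\neg[\varphi]\psi)$; $[\varphi](\psi\wedge\chi)\leftrightarrow[\varphi]\psi\wedge[\varphi]\chi$;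 $[\varphi]\mathrm{int}(\psi)\leftrightarrow(\mathrm{int}(\varphi)\to\mathrm{int}([\varphi]\psi))$; $[\varphi]K_i\psi\leftrightarrow(\mathrm{int}(\varphi)\to K_i[\varphi]\psi)$; $[\varphi][\psi]\chi\leftrightarrow[\neg[\varphi]\neg\mathrm{int}(\psi)]\chi$; $\Box\varphi\to[\chi]\varphi$ ($\chi\in\mathcal{L}_{PAL_{int}}$). Rules: modus ponens; from $\varphi$ infer $K_i\varphi$; from $\varphi$ infer $\mathrm{int}(\varphi)$; from $\varphi$ infer $[\psi]\varphi$; (DR5) from $\xi([\psi]\chi)$ for all $\psi\in\mathcal{L}_{PAL_{int}}$ infer $\xi(\Box\chi)$. A theory is a set of formulas containing all theorems of $APAL_{int}$ and closed under modus ponens and (DR5); it is consistent iff $\bot\notin$ it; a set of formulas is consistent iff it is contained in a consistent theory; a theory is maximally consistent iff it is consistent and every set properly containing it is inconsistent. $K_ix:=\{\varphi\mid K_i\varphi\in x\}$. *)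

theory Defs
  imports Main
begin

text \<open>Language L_APAL_int over Prop = nat (countable) and a finite nonempty
agent type 'i (finite by class; types are nonempty).\<close>

datatype 'i fm =
    Atom nat
  | Neg "'i fm"
  | Conj "'i fm" "'i fm"
  | K 'i "'i fm"
  | IntO "'i fm"
  | Ann "'i fm" "'i fm"
  | Box "'i fm"

definition Bot :: "'i fm" where
  "Bot = Conj (Atom 0) (Neg (Atom 0))"

definition Imp :: "'i fm \<Rightarrow> 'i fm \<Rightarrow> 'i fm" where
  "Imp a b = Neg (Conj a (Neg b))"

definition Iff :: "'i fm \<Rightarrow> 'i fm \<Rightarrow> 'i fm" where
  "Iff a b = Conj (Imp a b) (Imp b a)"

fun box_free :: "'i fm \<Rightarrow> bool" where
  "box_free (Atom p) = True"
| "box_free (Neg a) = box_free a"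
| "box_free (Conj a b) = (box_free a \<and> box_free b)"
| "box_free (K i a) = box_free a"
| "box_free (IntO a) = box_free a"
| "box_free (Ann a b) = (box_free a \<and> box_free b)"
| "box_free (Box a) = False"

text \<open>Propositional tautologies: formulas true under every boolean valuation
of their maximal non-boolean subformulas (atoms, K, int, announcements, box).\<close>
fun peval :: "('i fm \<Rightarrow> bool) \<Rightarrow> 'i fm \<Rightarrow> bool" where
  "peval v (Neg a) = (\<not> peval v a)"
| "peval v (Conj a b) = (peval v a \<and> peval v b)"
| "peval v a = v a"

definition tautology :: "'i fm \<Rightarrow> bool" where
  "tautology a \<longleftrightarrow> (\<forall>v. peval v a)"

datatype 'i nform =
    Hole
  | NImp "'i fm" "'i nform"
  | NK 'i "'i nform"
  | NIntO "'i nform"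
  | NAnn "'i fm" "'i nform"

fun nfill :: "'i nform \<Rightarrow> 'i fm \<Rightarrow> 'i fm" where
  "nfill Hole c = c"
| "nfill (NImp a f) c = Imp a (nfill f c)"
| "nfill (NK i f) c = K i (nfill f c)"
| "nfill (NIntO f) c = IntO (nfill f c)"
| "nfill (NAnn a f) c = Ann a (nfill f c)"

inductive axiom :: "'i fm \<Rightarrow> bool" where
  A0: "tautology a \<Longrightarrow> axiom a"
| AK: "axiom (Imp (K i (Imp a b)) (Imp (K i a) (K i b)))"
| AT: "axiom (Imp (K i a) a)"
| A4: "axiom (Imp (K i a) (K i (K i a)))"
| A5: "axiom (Imp (Neg (K i a)) (K i (Neg (K i a))))"
| IK: "axiom (Imp (IntO (Imp a b)) (Imp (IntO a) (IntO b)))"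
| IT: "axiom (Imp (IntO a) a)"
| I4: "axiom (Imp (IntO a) (IntO (IntO a)))"
| KI: "axiom (Imp (K i a) (IntO a))"
| RAtom: "axiom (Iff (Ann a (Atom p)) (Imp (IntO a) (Atom p)))"
| RNeg: "axiom (Iff (Ann a (Neg b)) (Imp (IntO a) (Neg (Ann a b))))"
| RConj: "axiom (Iff (Ann a (Conj b c)) (Conj (Ann a b) (Ann a c)))"
| RInt: "axiom (Iff (Ann a (IntO b)) (Imp (IntO a) (IntO (Ann a b))))"
| RK: "axiom (Iff (Ann a (K i b)) (Imp (IntO a) (K i (Ann a b))))"
| RAnn: "axiom (Iff (Ann a (Ann b c)) (Ann (Neg (Ann a (Neg (IntO b)))) c))"
| ABox: "box_free c \<Longrightarrow> axiom (Imp (Box a) (Ann c a))"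

inductive derivable :: "'i fm \<Rightarrow> bool" where
  Ax: "axiom a \<Longrightarrow> derivable a"
| MP: "derivable (Imp a b) \<Longrightarrow> derivable a \<Longrightarrow> derivable b"
| NecK: "derivable a \<Longrightarrow> derivable (K i a)"
| NecInt: "derivable a \<Longrightarrow> derivable (IntO a)"
| NecAnn: "derivable a \<Longrightarrow> derivable (Ann b a)"
| DR5: "(\<And>b. box_free b \<Longrightarrow> derivable (nfill f (Ann b c))) \<Longrightarrow> derivable (nfill f (Box c))"

definition is_theory :: "'i fm set \<Rightarrow> bool" where
  "is_theory x \<longleftrightarrow>
     {a. derivable a} \<subseteq> x
     \<and> (\<forall>a b. Imp a b \<in> x \<longrightarrow> a \<in> x \<longrightarrow> b \<in> x)
     \<and> (\<forall>f c. (\<forall>b. box_free b \<longrightarrow> nfill f (Ann b c) \<in> x) \<longrightarrow> nfill f (Box c) \<in> x)"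

definition consistent_theory :: "'i fm set \<Rightarrow> bool" where
  "consistent_theory x \<longleftrightarrow> is_theory x \<and> Bot \<notin> x"

definition consistent_set :: "'i fm set \<Rightarrow> bool" where
  "consistent_set s \<longleftrightarrow> (\<exists>x. consistent_theory x \<and> s \<subseteq> x)"

definition max_consistent_theory :: "'i fm set \<Rightarrow> bool" where
  "max_consistent_theory x \<longleftrightarrow>
     consistent_theory x \<and> (\<forall>s. x \<subset> s \<longrightarrow> \<not> consistent_set s)"

definition Kset :: "'i \<Rightarrow> 'i fm set \<Rightarrow> 'i fm set" where
  "Kset i x = {a. K i a \<in> x}"

end

theory Submission
  imports Defs "HOL-Library.Countable"
begin

instance fm :: (countable) countable by countable_datatype

lemma taut_thm: "tautology a \<Longrightarrow> is_theory t \<Longrightarrow> a \<in> t"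
  unfolding is_theory_def using derivable.Ax axiom.A0 by blast

lemma th_mp: "is_theory t \<Longrightarrow> Imp a b \<in> t \<Longrightarrow> a \<in> t \<Longrightarrow> b \<in> t"
  unfolding is_theory_def by blast

lemma th_t1: "is_theory t \<Longrightarrow> tautology (Imp p q) \<Longrightarrow> p \<in> t \<Longrightarrow> q \<in> t"
  using taut_thm th_mp by blast

lemma th_t2: "is_theory t \<Longrightarrow> tautology (Imp p (Imp q r)) \<Longrightarrow> p \<in> t \<Longrightarrow> q \<in> t \<Longrightarrow> r \<in> t"
  using taut_thm th_mp by blast

lemma th_dr5: "is_theory t \<Longrightarrow> (\<And>b. box_free b \<Longrightarrow> nfill f (Ann b c) \<in> t) \<Longrightarrow> nfill f (Box c) \<in> t"
  unfolding is_theory_def by blast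

definition ext :: "'i fm set \<Rightarrow> 'i fm \<Rightarrow> 'i fm set" where
  "ext t a = {c. Imp a c \<in> t}"

lemma ext_theory:
  fixes t :: "'a fm set"
  assumes t: "is_theory t" shows "is_theory (ext t a)"
  unfolding is_theory_def
proof (intro conjI allI impI subsetI)
  fix c :: "'a fm" assume "c \<in> {a. derivable a}"
  hence "c \<in> t" using t unfolding is_theory_def by blast
  thus "c \<in> ext t a" unfolding ext_def
    using th_t1[OF t, of c "Imp a c"] by (auto simp add: tautology_def Imp_def)
next
  fix c d assume "Imp c d \<in> ext t a" "c \<in> ext t a"
  thus "d \<in> ext t a" unfolding ext_def
    using th_t2[OF t, of "Imp a (Imp c d)" "Imp a c" "Imp a d"] by (auto simp add: tautology_def Imp_def)
next
  fix f c assume h: "\<forall>b. box_free b \<longrightarrow> nfill f (Ann b c) \<in> ext t a"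
  have "nfill (NImp a f) (Box c) \<in> t"
    by (rule th_dr5[OF t]) (use h in \<open>auto simp: ext_def\<close>)
  thus "nfill f (Box c) \<in> ext t a" by (simp add: ext_def)
qed

lemma ext_mem: "is_theory t \<Longrightarrow> a \<in> ext t a"
  unfolding ext_def by (auto intro: taut_thm simp: tautology_def Imp_def)

lemma ext_sub: fixes t :: "'a fm set" shows "is_theory t \<Longrightarrow> t \<subseteq> ext t a"
proof
  fix c assume "is_theory t" "c \<in> t"
  thus "c \<in> ext t a" unfolding ext_def
    using th_t1[of t c "Imp a c"] by (auto simp add: tautology_def Imp_def)
qed

lemma nfill_inj: "nfill f (Box c) = nfill g (Box d) \<Longrightarrow> f = g \<and> c = d"
  by (induction f arbitrary: g; case_tac g; auto simp: Imp_def)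

definition step :: "'i fm \<Rightarrow> 'i fm set \<Rightarrow> 'i fm \<Rightarrow> 'i fm set" where
  "step \<phi> t a = (if Imp a \<phi> \<notin> t then ext t a
     else if \<exists>f c. a = nfill f (Box c) then
       (let fc = (SOME fc. a = nfill (fst fc) (Box (snd fc)));
            b = (SOME b. box_free b \<and> Imp (Conj (Neg \<phi>) (Neg a)) (nfill (fst fc) (Ann b (snd fc))) \<notin> t)
        in ext t (Conj (Neg a) (Neg (nfill (fst fc) (Ann b (snd fc))))))
     else ext t (Neg a))"

lemma step_props:
  assumes t: "is_theory t" and p: "\<phi> \<notin> t"
  shows "is_theory (step \<phi> t a) \<and> \<phi> \<notin> step \<phi> t a \<and> t \<subseteq> step \<phi> t a \<and>
    (a \<in> step \<phi> t a \<or> (Neg a \<in> step \<phi> t a \<and>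
       (\<forall>f c. a = nfill f (Box c) \<longrightarrow> (\<exists>b. box_free b \<and> Neg (nfill f (Ann b c)) \<in> step \<phi> t a))))"
proof (cases "Imp a \<phi> \<in> t")
  case False
  hence st: "step \<phi> t a = ext t a" by (simp add: step_def)
  have "\<phi> \<notin> ext t a" using False by (simp add: ext_def)
  thus ?thesis unfolding st using ext_theory[OF t] ext_mem[OF t] ext_sub[OF t] by blast
next
  case True
  have na: "Imp (Neg a) \<phi> \<notin> t"
  proof
    assume "Imp (Neg a) \<phi> \<in> t"
    hence "\<phi> \<in> t" using True th_t2[OF t, of "Imp a \<phi>" "Imp (Neg a) \<phi>" \<phi>] by (auto simp add: tautology_def Imp_def)
    thus False using p by simp
  qed
  show ?thesis
  proof (cases "\<exists>f c. a = nfill f (Box c)")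
    case False
    have "\<phi> \<notin> ext t (Neg a)" using na by (simp add: ext_def)
    moreover have "Neg a \<in> ext t (Neg a)" by (rule ext_mem[OF t])
    ultimately show ?thesis using True False ext_theory[OF t] ext_sub[OF t]
      by (simp add: step_def)
  next
    case ex: True
    then obtain f c where fc: "a = nfill f (Box c)" by blast
    define fc where "fc = (SOME fc. a = nfill (fst fc) (Box (snd fc)))"
    have fceq: "fc = (f, c)"
    proof -
      have "a = nfill (fst fc) (Box (snd fc))" unfolding fc_def
        by (rule someI[where x="(f,c)"]) (simp add: fc)
      thus ?thesis using fc nfill_inj by (metis prod.collapse)
    qed
    have n1: "Imp (Conj (Neg \<phi>) (Neg a)) a \<notin> t"
    proof
      assume "Imp (Conj (Neg \<phi>) (Neg a)) a \<in> t"
      hence "Imp (Neg a) \<phi> \<in> t" using th_t1[OF t, of "Imp (Conj (Neg \<phi>) (Neg a)) a" "Imp (Neg a) \<phi>"] by (auto simp add: tautology_def Imp_def)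
      thus False using na by simp
    qed
    have "\<exists>b. box_free b \<and> Imp (Conj (Neg \<phi>) (Neg a)) (nfill f (Ann b c)) \<notin> t"
    proof (rule ccontr)
      assume "\<not> ?thesis"
      hence "nfill (NImp (Conj (Neg \<phi>) (Neg a)) f) (Box c) \<in> t"
        by (intro th_dr5[OF t]) auto
      thus False using n1 fc by simp
    qed
    define b where "b = (SOME b. box_free b \<and> Imp (Conj (Neg \<phi>) (Neg a)) (nfill f (Ann b c)) \<notin> t)"
    have b: "box_free b \<and> Imp (Conj (Neg \<phi>) (Neg a)) (nfill f (Ann b c)) \<notin> t"
      unfolding b_def by (rule someI_ex) fact
    define d where "d = nfill f (Ann b c)"
    have st: "step \<phi> t a = ext t (Conj (Neg a) (Neg d))"
      using True ex unfolding step_def fc_def[symmetric] fceq b_def[symmetric] d_def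
      by (simp add: b_def)
    have np: "\<phi> \<notin> ext t (Conj (Neg a) (Neg d))"
    proof
      assume "\<phi> \<in> ext t (Conj (Neg a) (Neg d))"
      hence "Imp (Conj (Neg a) (Neg d)) \<phi> \<in> t" by (simp add: ext_def)
      hence "Imp (Conj (Neg \<phi>) (Neg a)) d \<in> t" using th_t1[OF t, of "Imp (Conj (Neg a) (Neg d)) \<phi>" "Imp (Conj (Neg \<phi>) (Neg a)) d"] by (auto simp add: tautology_def Imp_def)
      thus False using b d_def by simp
    qed
    have m: "Conj (Neg a) (Neg d) \<in> ext t (Conj (Neg a) (Neg d))" by (rule ext_mem[OF t])
    have m1: "Neg a \<in> ext t (Conj (Neg a) (Neg d))"
      using th_t1[OF ext_theory[OF t], of "Conj (Neg a) (Neg d)" "Neg a"] m by (auto simp add: tautology_def Imp_def)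
    have m2: "Neg d \<in> ext t (Conj (Neg a) (Neg d))"
      using th_t1[OF ext_theory[OF t], of "Conj (Neg a) (Neg d)" "Neg d"] m by (auto simp add: tautology_def Imp_def)
    have "\<forall>f' c'. a = nfill f' (Box c') \<longrightarrow> (\<exists>b. box_free b \<and> Neg (nfill f' (Ann b c')) \<in> step \<phi> t a)"
    proof (intro allI impI)
      fix f' c' assume "a = nfill f' (Box c')"
      hence "f' = f" "c' = c" using fc nfill_inj by metis+
      thus "\<exists>b. box_free b \<and> Neg (nfill f' (Ann b c')) \<in> step \<phi> t a"
        using b m2 st d_def by auto
    qed
    thus ?thesis using st np m1 ext_theory[OF t] ext_sub[OF t] by simp
  qed
qed

fun chain :: "('i::countable) fm \<Rightarrow> 'i fm set \<Rightarrow> nat \<Rightarrow> 'i fm set" where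
  "chain \<phi> t 0 = t"
| "chain \<phi> t (Suc n) = step \<phi> (chain \<phi> t n) (from_nat n)"

lemma chain_inv:
  fixes t :: "('i::countable) fm set"
  assumes "is_theory t" "\<phi> \<notin> t"
  shows "is_theory (chain \<phi> t n) \<and> \<phi> \<notin> chain \<phi> t n"
  by (induction n) (use assms step_props in auto)

lemma lindenbaum:
  fixes t :: "('i::countable) fm set"
  assumes t: "is_theory t" and p: "\<phi> \<notin> t"
  shows "\<exists>y. max_consistent_theory y \<and> t \<subseteq> y \<and> \<phi> \<notin> y"
proof -
  let ?X = "chain \<phi> t"
  define y where "y = (\<Union>n. ?X n)"
  have inv: "is_theory (?X n)" "\<phi> \<notin> ?X n" for n using chain_inv[OF t p] by auto
  have sp: "is_theory (?X (Suc n)) \<and> \<phi> \<notin> ?X (Suc n) \<and> ?X n \<subseteq> ?X (Suc n) \<and>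
    (from_nat n \<in> ?X (Suc n) \<or> (Neg (from_nat n) \<in> ?X (Suc n) \<and>
       (\<forall>f c. from_nat n = nfill f (Box c) \<longrightarrow> (\<exists>b. box_free b \<and> Neg (nfill f (Ann b c)) \<in> ?X (Suc n)))))" for n
    using step_props[OF inv(1) inv(2), of n "from_nat n"] by simp
  have mono: "m \<le> n \<Longrightarrow> ?X m \<subseteq> ?X n" for m n
    by (rule lift_Suc_mono_le[of ?X]) (use sp in auto)
  have Xy: "?X n \<subseteq> y" for n unfolding y_def by blast
  have py: "\<phi> \<notin> y" unfolding y_def using inv by blast
  have mp: "Imp a b \<in> y \<Longrightarrow> a \<in> y \<Longrightarrow> b \<in> y" for a b
  proof -
    assume "Imp a b \<in> y" "a \<in> y"
    then obtain m n where "Imp a b \<in> ?X m" "a \<in> ?X n" unfolding y_def by blast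
    hence "Imp a b \<in> ?X (max m n)" "a \<in> ?X (max m n)" using mono[of m "max m n"] mono[of n "max m n"] by auto
    hence "b \<in> ?X (max m n)" using th_mp[OF inv(1)] by blast
    thus ?thesis using Xy by blast
  qed
  have botphi: "Bot \<in> s \<Longrightarrow> is_theory s \<Longrightarrow> \<phi> \<in> s" for s
    using th_t1[of s Bot \<phi>] by (simp add: tautology_def Imp_def Bot_def)
  have tauty: "tautology a \<Longrightarrow> a \<in> y" for a using taut_thm[OF _ inv(1)[of 0]] Xy[of 0] by blast
  have contra: "a \<in> y \<Longrightarrow> Neg a \<in> y \<Longrightarrow> False" for a
  proof -
    assume "a \<in> y" "Neg a \<in> y"
    moreover have "Imp a (Imp (Neg a) \<phi>) \<in> y" by (rule tauty) (simp add: tautology_def Imp_def)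
    ultimately show False using mp py by blast
  qed
  have stage: "a \<in> y \<or> (Neg a \<in> y \<and>
       (\<forall>f c. a = nfill f (Box c) \<longrightarrow> (\<exists>b. box_free b \<and> Neg (nfill f (Ann b c)) \<in> y)))" for a
  proof -
    define S where "S = ?X (Suc (to_nat a))"
    have Sy: "S \<subseteq> y" unfolding S_def by (rule Xy)
    have "a \<in> S \<or> (Neg a \<in> S \<and>
       (\<forall>f c. a = nfill f (Box c) \<longrightarrow> (\<exists>b. box_free b \<and> Neg (nfill f (Ann b c)) \<in> S)))"
      using sp[of "to_nat a"] unfolding S_def[symmetric] from_nat_to_nat by blast
    thus ?thesis using Sy by blast
  qed
  have thy: "is_theory y"
    unfolding is_theory_def
  proof (intro conjI allI impI)
    show "{a. derivable a} \<subseteq> y" using inv(1)[of 0] Xy[of 0] unfolding is_theory_def by auto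
    show "\<And>a b. Imp a b \<in> y \<Longrightarrow> a \<in> y \<Longrightarrow> b \<in> y" by (rule mp)
  next
    fix f c assume h: "\<forall>b. box_free b \<longrightarrow> nfill f (Ann b c) \<in> y"
    show "nfill f (Box c) \<in> y"
    proof (rule ccontr)
      assume "nfill f (Box c) \<notin> y"
      then obtain b where "box_free b" "Neg (nfill f (Ann b c)) \<in> y"
        using stage[of "nfill f (Box c)"] by blast
      moreover have "nfill f (Ann b c) \<in> y" using h calculation by blast
      ultimately show False using contra by blast
    qed
  qed
  have boty: "Bot \<notin> y"
  proof
    assume "Bot \<in> y"
    moreover have "Imp Bot \<phi> \<in> y" by (rule tauty) (simp add: tautology_def Imp_def Bot_def)
    ultimately show False using mp py by blast
  qed
  have "max_consistent_theory y"
    unfolding max_consistent_theory_def consistent_theory_def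
  proof (intro conjI allI impI thy boty notI)
    fix s assume "y \<subset> s" "consistent_set s"
    then obtain z where z: "consistent_theory z" "s \<subseteq> z" unfolding consistent_set_def by blast
    obtain a where a: "a \<in> s" "a \<notin> y" using \<open>y \<subset> s\<close> by blast
    have "Neg a \<in> z" using stage[of a] a \<open>y \<subset> s\<close> z by blast
    moreover have "a \<in> z" using a z by blast
    moreover have "Imp a (Imp (Neg a) Bot) \<in> z"
      using taut_thm[of "Imp a (Imp (Neg a) Bot)" z] z(1) unfolding consistent_theory_def by (simp add: tautology_def Imp_def Bot_def)
    ultimately show False using z(1) unfolding consistent_theory_def using th_mp by metis
  qed
  moreover have "t \<subseteq> y" using Xy[of 0] by simp
  ultimately show ?thesis using py by blast
qed

lemma Kset_theory:
  fixes x :: "'a fm set"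
  assumes x: "is_theory x" shows "is_theory (Kset i x)"
  unfolding is_theory_def
proof (intro conjI allI impI subsetI)
  fix c :: "'a fm" assume "c \<in> {a. derivable a}"
  hence "derivable (K i c)" by (auto intro: derivable.NecK)
  thus "c \<in> Kset i x" using x unfolding is_theory_def Kset_def by blast
next
  fix a b assume "Imp a b \<in> Kset i x" "a \<in> Kset i x"
  moreover have "Imp (K i (Imp a b)) (Imp (K i a) (K i b)) \<in> x"
    using x unfolding is_theory_def by (blast intro: derivable.Ax axiom.AK)
  ultimately show "b \<in> Kset i x" using th_mp[OF x] unfolding Kset_def by blast
next
  fix f c assume h: "\<forall>b. box_free b \<longrightarrow> nfill f (Ann b c) \<in> Kset i x"
  have "nfill (NK i f) (Box c) \<in> x"
    by (rule th_dr5[OF x]) (use h in \<open>auto simp: Kset_def\<close>)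
  thus "nfill f (Box c) \<in> Kset i x" by (simp add: Kset_def)
qed

theorem mainTheorem19:
  fixes x :: "('i::finite) fm set" and \<phi> :: "'i fm" and i :: 'i
  assumes "is_theory x"
    and "K i \<phi> \<notin> x"
  shows "\<exists>y. max_consistent_theory y \<and> Kset i x \<subseteq> y \<and> \<phi> \<notin> y"
  using lindenbaum[OF Kset_theory[OF assms(1)], of \<phi> i] assms(2) by (simp add: Kset_def)

end
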